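(* Let $\lambda\in(\frac16,\frac56)$. For every $x\in[0,1]$, $$\liminf_{r\to0}\frac{\log\mu_\lambda(B(x,r))}{\log r}=\gamma_\lambda-\limsup_{n\to\infty}\frac{\beta_1(x,n)\log(6\lambda+1)+\beta_2(x,n)\log(6\lambda-1)}{\beta_{0,3}(x,n)\log3+\beta_{1,2}(x,n)\log6}.$$
   Context: $\gamma_\lambda$ is the unique real number $\ge1$ with $2\cdot3^{-\gamma_\lambda}+(6\lambda+1)6^{-\gamma_\lambda}+(6\lambda-1)6^{-\gamma_\lambda}=1$; $p_0=p_3=3^{-\gamma_\lambda}$, $p_1=(6\lambda+1)6^{-\gamma_\lambda}$, $p_2=(6\lambda-1)6^{-\gamma_\lambda}$; $S_0(x)=x/3$, $S_1(x)=x/6+1/3$, $S_2(x)=-x/6+2/3$, $S_3(x)=x/3+2/3$; $\mu_\lambda$ is the unique Borel probability measure with $\mu_\lambda=\sum_ip_i\,\mu_\lambda\circ S_i^{-1}$. Dynamics: $T(x)=3x$ on $[0,\frac13)$, $6x-2$ on $[\frac13,\frac12)$, $4-6x$ on $[\frac12,\frac23)$, $3x-2$ on $[\frac23,1]$; $U(x)=0,1,2,3$ on these intervals; $u_n(x)=U(T^nx)$; $\beta_i(x,n)=\#\{k<n:u_k(x)=i\}$, $\beta_{i,j}=\beta_i+\beta_j$. *)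

theory Defs
  imports "HOL-Analysis.Analysis" "HOL-Probability.Probability"
begin

definition gamma_lam :: "real \<Rightarrow> real" where
  "gamma_lam lam = (THE g. g \<ge> 1 \<and>
     2 * 3 powr (-g) + (6*lam+1) * 6 powr (-g) + (6*lam-1) * 6 powr (-g) = 1)"

definition p_lam :: "real \<Rightarrow> nat \<Rightarrow> real" where
  "p_lam lam i = (if i = 1 then (6*lam+1) * 6 powr (- gamma_lam lam)
                  else if i = 2 then (6*lam-1) * 6 powr (- gamma_lam lam)
                  else 3 powr (- gamma_lam lam))"

definition S_map :: "nat \<Rightarrow> real \<Rightarrow> real" where
  "S_map i x = (if i = 0 then x/3 else if i = 1 then x/6 + 1/3
                else if i = 2 then -x/6 + 2/3 else x/3 + 2/3)"

definition self_similar_lam :: "real \<Rightarrow> real measure \<Rightarrow> bool" where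
  "self_similar_lam lam mu \<longleftrightarrow> prob_space mu \<and> sets mu = sets borel \<and>
     (\<forall>A\<in>sets borel. measure mu A = (\<Sum>i<4. p_lam lam i * measure mu (S_map i -` A)))"

definition T_map :: "real \<Rightarrow> real" where
  "T_map x = (if x < 1/3 then 3*x else if x < 1/2 then 6*x - 2
              else if x < 2/3 then 4 - 6*x else 3*x - 2)"

definition U_map :: "real \<Rightarrow> nat" where
  "U_map x = (if x < 1/3 then 0 else if x < 1/2 then 1 else if x < 2/3 then 2 else 3)"

definition u_digit :: "nat \<Rightarrow> real \<Rightarrow> nat" where
  "u_digit n x = U_map ((T_map ^^ n) x)"

definition beta_cnt :: "nat \<Rightarrow> real \<Rightarrow> nat \<Rightarrow> nat" where
  "beta_cnt i x n = card {k. k < n \<and> u_digit k x = i}"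

end

theory Submission
  imports Defs
begin

locale ssm = prob_space mu for mu :: "real measure" +
  fixes lam :: real
  assumes lam1: "1/6 < lam" and lam2: "lam < 5/6"
    and sets_mu: "sets mu = sets borel"
    and eqn: "\<And>A. A \<in> sets borel \<Longrightarrow>
        measure mu A = (\<Sum>i<4. p_lam lam i * measure mu (S_map i -` A))"
begin

abbreviation "g \<equiv> gamma_lam lam"
abbreviation "p \<equiv> p_lam lam"

lemma eqn4: "A \<in> sets borel \<Longrightarrow> measure mu A =
   p 0 * measure mu (S_map 0 -` A) + p 1 * measure mu (S_map 1 -` A) +
   p 2 * measure mu (S_map 2 -` A) + p 3 * measure mu (S_map 3 -` A)"
  using eqn[of A] by (simp add: eval_nat_numeral)

lemma p_pos: "p i > 0"
  using lam1 by (auto simp: p_lam_def)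

lemma space_mu: "space mu = UNIV"
  using sets_eq_imp_space_eq[OF sets_mu] by simp

lemma prob_UNIV: "measure mu UNIV = 1"
  using prob_space space_mu by simp

lemma p_sum: "p 0 + p 1 + p 2 + p 3 = 1"
  using eqn4[of UNIV] prob_UNIV by simp

lemma p_lt1: "p i < 1"
proof -
  have "p i = p 0 \<or> p i = p 1 \<or> p i = p 2 \<or> p i = p 3" by (simp add: p_lam_def)
  moreover have "p 0 < 1" "p 1 < 1" "p 2 < 1" "p 3 < 1"
    using p_sum p_pos[of 0] p_pos[of 1] p_pos[of 2] p_pos[of 3] by linarith+
  ultimately show ?thesis by auto
qed

lemma meas_le: "A \<subseteq> B \<Longrightarrow> B \<in> sets borel \<Longrightarrow> measure mu A \<le> measure mu B"
  by (rule finite_measure_mono) (auto simp: sets_mu)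

definition At :: "real \<Rightarrow> real set" where "At t = {y. y < -t \<or> 1 + t < y}"

lemma At_borel: "At t \<in> sets borel"
proof -
  have "At t = {..< -t} \<union> {1+t<..}" by (auto simp: At_def)
  thus ?thesis by simp
qed

lemma At_pre: "t \<ge> 0 \<Longrightarrow> i < 4 \<Longrightarrow> S_map i -` At t \<subseteq> At (3*t)"
  by (auto simp: At_def S_map_def split: if_splits)

lemma At_step: "t \<ge> 0 \<Longrightarrow> measure mu (At t) \<le> measure mu (At (3*t))"
proof -
  assume t: "t \<ge> 0"
  have "\<And>i. i < 4 \<Longrightarrow> measure mu (S_map i -` At t) \<le> measure mu (At (3*t))"
    using At_pre[OF t] meas_le At_borel by blast
  hence "measure mu (At t) \<le> p 0 * measure mu (At (3*t)) + p 1 * measure mu (At (3*t)) +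
     p 2 * measure mu (At (3*t)) + p 3 * measure mu (At (3*t))"
  proof -
    have "p i * measure mu (S_map i -` At t) \<le> p i * measure mu (At (3*t))" if "i < 4" for i
      using that \<open>\<And>i. i < 4 \<Longrightarrow> _\<close> p_pos[of i] by (intro mult_left_mono) auto
    from this[of 0] this[of 1] this[of 2] this[of 3] show ?thesis
      using eqn4[OF At_borel, of t] by linarith
  qed
  also have "\<dots> = measure mu (At (3*t))" using p_sum by algebra
  finally show ?thesis .
qed

lemma At_anti: "s \<le> s' \<Longrightarrow> At s' \<subseteq> At s"
  unfolding At_def by auto

lemma At_abs: "\<bar>y\<bar> < s \<Longrightarrow> y \<notin> At s"
  by (auto simp: At_def)

lemma At_zero_pos: "t > 0 \<Longrightarrow> measure mu (At t) = 0"
proof -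
  assume t: "t > 0"
  have le: "measure mu (At t) \<le> measure mu (At (3^n*t))" for n
  proof (induction n)
    case (Suc n)
    have "measure mu (At (3^n*t)) \<le> measure mu (At (3*(3^n*t)))"
      by (rule At_step) (use t in simp)
    moreover have "(3::real)^Suc n * t = 3*(3^n*t)" by simp
    ultimately show ?case using Suc.IH by (metis order_trans)
  qed simp
  have dec: "antimono_on UNIV (\<lambda>n. At (3^n*t))"
    unfolding monotone_on_def
  proof (intro ballI impI)
    fix m n :: nat assume "m \<le> n"
    hence "(3::real)^m \<le> 3^n" by (rule power_increasing) simp
    hence "3^m*t \<le> 3^n*t" using t by (simp add: mult_right_mono)
    thus "At (3^n*t) \<le> At (3^m*t)" by (rule At_anti)
  qed
  have int: "(\<Inter>n. At (3^n*t)) = {}"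
  proof safe
    fix y assume y: "y \<in> (\<Inter>n. At (3^n*t))"
    have "\<exists>n. \<bar>y\<bar> / t < (3::real)^n" by (rule real_arch_pow) simp
    then obtain n where n: "\<bar>y\<bar> / t < 3^n" by blast
    hence lt: "\<bar>y\<bar> < 3^n * t" using t by (simp add: pos_divide_less_eq)
    have "y \<in> At (3^n*t)" using y by blast
    thus "y \<in> {}" using At_abs[OF lt] by blast
  qed
  have "(\<lambda>n. measure mu (At (3^n*t))) \<longlonglongrightarrow> measure mu (\<Inter>n. At (3^n*t))"
  proof (rule finite_Lim_measure_decseq)
    show "range (\<lambda>n. At (3^n*t)) \<subseteq> sets mu" using At_borel sets_mu by blast
  qed (rule dec)
  hence "(\<lambda>n. measure mu (At (3^n*t))) \<longlonglongrightarrow> 0" using int by simp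
  hence "measure mu (At t) \<le> 0" by (rule LIMSEQ_le_const) (use le in blast)
  thus ?thesis by (simp add: measure_nonneg antisym)
qed

lemma At_mono0: "0 < e \<Longrightarrow> y \<in> At e \<Longrightarrow> y \<in> At 0"
  by (auto simp: At_def)

lemma At0: "measure mu (At 0) = 0"
proof -
  have inc: "incseq (\<lambda>n. At (1/(Suc n)))"
    unfolding monotone_on_def
  proof (intro ballI impI)
    fix m n :: nat assume "m \<le> n"
    hence "1/real (Suc n) \<le> 1/real (Suc m)" by (simp add: frac_le)
    thus "At (1/(Suc m)) \<le> At (1/(Suc n))" by (rule At_anti)
  qed
  have un: "(\<Union>n. At (1/(Suc n))) = At 0"
  proof safe
    fix y assume "y \<in> At 0"
    then consider "y < 0" | "1 < y" by (auto simp: At_def)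
    thus "y \<in> (\<Union>n. At (1/(Suc n)))"
    proof cases
      case 1
      obtain n where "1/(-y) < real n" using reals_Archimedean2 by blast
      hence "1/(-y) < real (Suc n)" by simp
      hence "1/real (Suc n) < -y" using 1 by (metis divide_less_eq_1_pos divide_divide_eq_left' neg_0_less_iff_less of_nat_0_less_iff zero_less_Suc mult.commute divide_less_eq)
      hence "y \<in> At (1/real (Suc n))" unfolding At_def by simp
      thus ?thesis by blast
    next
      case 2
      obtain n where "1/(y-1) < real n" using reals_Archimedean2 by blast
      hence "1/(y-1) < real (Suc n)" by simp
      hence "1/real (Suc n) < y - 1" using 2 by (simp add: field_simps)
      hence "y \<in> At (1/real (Suc n))" unfolding At_def by simp
      thus ?thesis by blast
    qed
  next
    fix y n assume "y \<in> At (1/real (Suc n))"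
    moreover have "0 < 1/real (Suc n)" by simp
    ultimately show "y \<in> At 0" using At_mono0 by blast
  qed
  have "(\<lambda>n. measure mu (At (1/(Suc n)))) \<longlonglongrightarrow> measure mu (\<Union>n. At (1/(Suc n)))"
  proof (rule finite_Lim_measure_incseq)
    show "range (\<lambda>n. At (1/(Suc n))) \<subseteq> sets mu" using At_borel sets_mu by blast
  qed (rule inc)
  moreover have "(\<lambda>n. measure mu (At (1/(Suc n)))) = (\<lambda>n. 0)"
    by (intro ext At_zero_pos) simp
  ultimately have "(\<lambda>n. 0::real) \<longlonglongrightarrow> measure mu (At 0)" using un by simp
  thus ?thesis using LIMSEQ_unique[OF _ tendsto_const] by metis
qed

lemma null_At0: "A \<subseteq> At 0 \<Longrightarrow> measure mu A = 0"
  using meas_le[of A "At 0"] At_borel At0 measure_nonneg[of mu A] by simp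

lemma atom0: "measure mu {0} = 0"
proof -
  have "measure mu {0} = p 0 * measure mu {0}"
  proof -
    have a: "S_map 0 -` {0} = {0}" by (auto simp: S_map_def)
    have "S_map i -` {0} \<subseteq> At 0" if "i = 1 \<or> i = 2 \<or> i = 3" for i
      using that by (auto simp: S_map_def At_def)
    thus ?thesis using eqn4[of "{0}"] a null_At0 by simp
  qed
  thus ?thesis using p_lt1[of 0] by (simp add: algebra_simps)
qed

lemma atom1: "measure mu {1} = 0"
proof -
  have "measure mu {1} = p 3 * measure mu {1}"
  proof -
    have a: "S_map 3 -` {1} = {1}" by (auto simp: S_map_def)
    have "S_map i -` {1} \<subseteq> At 0" if "i = 0 \<or> i = 1 \<or> i = 2" for i
      using that by (auto simp: S_map_def At_def)
    thus ?thesis using eqn4[of "{1}"] a null_At0 by simp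
  qed
  thus ?thesis using p_lt1[of 3] by (simp add: algebra_simps)
qed

definition "Nul = - {0<..<(1::real)}"

lemma Nul_borel: "Nul \<in> sets borel" by (simp add: Nul_def)

lemma Nul0: "measure mu Nul = 0"
proof -
  have "Nul = At 0 \<union> ({0} \<union> {1})" by (auto simp: Nul_def At_def)
  hence "measure mu Nul \<le> measure mu (At 0) + (measure mu {0} + measure mu {1})"
  proof -
    have "measure mu ({0} \<union> {1}) \<le> measure mu {0} + measure mu {1}"
      by (rule measure_Un_le) (auto simp: sets_mu)
    moreover have "measure mu (At 0 \<union> ({0} \<union> {1})) \<le> measure mu (At 0) + measure mu ({0} \<union> {1})"
      by (rule measure_Un_le) (auto simp: sets_mu At_borel)
    ultimately show ?thesis using \<open>Nul = _\<close> by simp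
  qed
  thus ?thesis using At0 atom0 atom1 measure_nonneg[of mu Nul] by simp
qed

lemma null_Nul: "A \<subseteq> Nul \<Longrightarrow> measure mu A = 0"
  using meas_le[of A Nul] Nul_borel Nul0 measure_nonneg[of mu A] by simp

end

definition cc :: "nat \<Rightarrow> real" where "cc i = (if i = 1 \<or> i = 2 then 1/6 else 1/3)"

fun lohi :: "nat list \<Rightarrow> real \<times> real" where
  "lohi [] = (0,1)"
| "lohi (i#w) = (if i = 2 then (S_map 2 (snd (lohi w)), S_map 2 (fst (lohi w)))
                 else (S_map i (fst (lohi w)), S_map i (snd (lohi w))))"

definition "lo w = fst (lohi w)"
definition "hi w = snd (lohi w)"
definition "len w = prod_list (map cc w)"

lemma lo_Nil[simp]: "lo [] = 0" and hi_Nil[simp]: "hi [] = 1" and len_Nil[simp]: "len [] = 1"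
  by (auto simp: lo_def hi_def len_def)

lemma lo_Cons: "lo (i#w) = (if i = 2 then S_map 2 (hi w) else S_map i (lo w))"
  and hi_Cons: "hi (i#w) = (if i = 2 then S_map 2 (lo w) else S_map i (hi w))"
  and len_Cons: "len (i#w) = cc i * len w"
  by (auto simp: lo_def hi_def len_def)

lemma digit_cases: fixes i :: nat obtains "i = 0" | "i = 1" | "i = 2" | "3 \<le> i"
  by linarith

lemma S0[simp]: "S_map 0 x = x/3" and S1[simp]: "S_map 1 x = x/6 + 1/3"
  and S2[simp]: "S_map 2 x = -x/6 + 2/3" and S3[simp]: "3 \<le> i \<Longrightarrow> S_map i x = x/3 + 2/3"
  by (auto simp: S_map_def)

lemma S1'[simp]: "S_map (Suc 0) x = x/6 + 1/3" and cc1'[simp]: "cc (Suc 0) = 1/6"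
  by (auto simp: S_map_def cc_def)

lemma cc0[simp]: "cc 0 = 1/3" and cc1[simp]: "cc 1 = 1/6" and cc2[simp]: "cc 2 = 1/6"
  and cc3[simp]: "3 \<le> i \<Longrightarrow> cc i = 1/3"
  by (auto simp: cc_def)

lemma len_pos: "len w > 0"
proof (induction w)
  case (Cons i w) thus ?case by (cases i rule: digit_cases) (auto simp: len_Cons)
qed simp

lemma lohi_basic: "0 \<le> lo w \<and> lo w \<le> hi w \<and> hi w \<le> 1 \<and> hi w - lo w = len w"
proof (induction w)
  case (Cons i w)
  thus ?case by (cases i rule: digit_cases) (simp_all add: lo_Cons hi_Cons len_Cons)
qed simp

lemma lo_ge0: "0 \<le> lo w" and lo_le_hi: "lo w \<le> hi w" and hi_le1: "hi w \<le> 1"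
  and hi_lo: "hi w - lo w = len w"
  using lohi_basic[of w] by auto

lemma lo_gap: "lo w \<noteq> 0 \<Longrightarrow> len w \<le> lo w"
proof (induction w)
  case (Cons i w)
  note b = lohi_basic[of w]
  show ?case
  proof (cases i rule: digit_cases)
    case 1
    hence e: "lo (i#w) = lo w/3" "len (i#w) = len w/3" by (simp_all add: lo_Cons len_Cons)
    hence "lo w \<noteq> 0" using Cons.prems by simp
    hence "len w \<le> lo w" by (rule Cons.IH)
    thus ?thesis using e by simp
  next
    case 2
    hence e: "lo (i#w) = lo w/6 + 1/3" "len (i#w) = len w/6" by (simp_all add: lo_Cons len_Cons)
    thus ?thesis using b by linarith
  next
    case 3
    hence e: "lo (i#w) = -hi w/6 + 2/3" "len (i#w) = len w/6" by (simp_all add: lo_Cons len_Cons)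
    thus ?thesis using b by linarith
  next
    case 4
    hence e: "lo (i#w) = lo w/3 + 2/3" "len (i#w) = len w/3" by (simp_all add: lo_Cons len_Cons)
    thus ?thesis using b by linarith
  qed
qed simp

lemma hi_gap: "hi w \<noteq> 1 \<Longrightarrow> len w \<le> 1 - hi w"
proof (induction w)
  case (Cons i w)
  note b = lohi_basic[of w]
  show ?case
  proof (cases i rule: digit_cases)
    case 1
    hence e: "hi (i#w) = hi w/3" "len (i#w) = len w/3" by (simp_all add: hi_Cons len_Cons)
    thus ?thesis using b by linarith
  next
    case 2
    hence e: "hi (i#w) = hi w/6 + 1/3" "len (i#w) = len w/6" by (simp_all add: hi_Cons len_Cons)
    thus ?thesis using b by linarith
  next
    case 3
    hence e: "hi (i#w) = -lo w/6 + 2/3" "len (i#w) = len w/6" by (simp_all add: hi_Cons len_Cons)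
    thus ?thesis using b by linarith
  next
    case 4
    hence e: "hi (i#w) = hi w/3 + 2/3" "len (i#w) = len w/3" by (simp_all add: hi_Cons len_Cons)
    hence "hi w \<noteq> 1" using Cons.prems by simp
    hence "len w \<le> 1 - hi w" by (rule Cons.IH)
    thus ?thesis using e by simp
  qed
qed simp

lemma lo0_Cons: "lo (i#w) = 0 \<Longrightarrow> i = 0 \<and> lo w = 0"
  using lohi_basic[of w] by (cases i rule: digit_cases) (simp_all add: lo_Cons)

lemma hi1_Cons: "hi (i#w) = 1 \<Longrightarrow> i \<ge> 3 \<and> hi w = 1"
  using lohi_basic[of w] by (cases i rule: digit_cases) (simp_all add: hi_Cons)

definition "wprob lam w = prod_list (map (p_lam lam) w)"

lemma wprob_Nil[simp]: "wprob lam [] = 1" and wprob_Cons: "wprob lam (i#w) = p_lam lam i * wprob lam w"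
  by (auto simp: wprob_def)

lemma lo0_prob: "lo w = 0 \<Longrightarrow> wprob lam w = len w powr gamma_lam lam"
proof (induction w)
  case (Cons i w)
  have i: "i = 0" and w: "lo w = 0" using lo0_Cons[OF Cons.prems] by simp_all
  have "wprob lam (i#w) = 3 powr (- gamma_lam lam) * len w powr gamma_lam lam"
    using Cons.IH[OF w] i by (simp add: wprob_Cons p_lam_def)
  also have "\<dots> = (len w / 3) powr gamma_lam lam"
  proof -
    have "(len w / 3) powr gamma_lam lam = len w powr gamma_lam lam / 3 powr gamma_lam lam"
      using len_pos[of w] by (simp add: powr_divide)
    moreover have "(3::real) powr (- gamma_lam lam) = 1 / 3 powr gamma_lam lam"
      by (simp add: powr_minus_divide)
    ultimately show ?thesis by simp
  qed
  finally show ?case using i by (simp add: len_Cons)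
qed simp

lemma hi1_prob: "hi w = 1 \<Longrightarrow> wprob lam w = len w powr gamma_lam lam"
proof (induction w)
  case (Cons i w)
  have i: "i \<ge> 3" and w: "hi w = 1" using hi1_Cons[OF Cons.prems] by simp_all
  have "wprob lam (i#w) = 3 powr (- gamma_lam lam) * len w powr gamma_lam lam"
    using Cons.IH[OF w] i by (simp add: wprob_Cons p_lam_def)
  also have "\<dots> = (len w / 3) powr gamma_lam lam"
  proof -
    have "(len w / 3) powr gamma_lam lam = len w powr gamma_lam lam / 3 powr gamma_lam lam"
      using len_pos[of w] by (simp add: powr_divide)
    moreover have "(3::real) powr (- gamma_lam lam) = 1 / 3 powr gamma_lam lam"
      by (simp add: powr_minus_divide)
    ultimately show ?thesis by simp
  qed
  finally show ?case using i by (simp add: len_Cons)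
qed simp

context ssm begin

lemma img_aux:
  assumes "A \<in> sets borel" "S_map i -` A = E" "\<And>j. j < 4 \<Longrightarrow> j \<noteq> i \<Longrightarrow> S_map j -` A \<subseteq> Nul"
    "i < 4"
  shows "measure mu A = p i * measure mu E"
proof -
  have z: "j < 4 \<Longrightarrow> j \<noteq> i \<Longrightarrow> measure mu (S_map j -` A) = 0" for j
    using assms(3) null_Nul by blast
  have "i = 0 \<or> i = 1 \<or> i = 2 \<or> i = 3" using assms(4) by auto
  thus ?thesis using eqn4[OF assms(1)] z[of 0] z[of 1] z[of 2] z[of 3] assms(2) by auto
qed

lemma img:
  assumes "0 \<le> a" "a \<le> b" "b \<le> 1" "i < 4"
  shows "measure mu {(if i = 2 then S_map 2 b else S_map i a) .. (if i = 2 then S_map 2 a else S_map i b)}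
      = p i * measure mu {a..b}"
proof (rule img_aux)
  show "S_map i -` {(if i = 2 then S_map 2 b else S_map i a) .. (if i = 2 then S_map 2 a else S_map i b)} = {a..b}"
  proof -
    have "i = 0 \<or> i = 1 \<or> i = 2 \<or> i = 3" using assms by auto
    thus ?thesis using assms by (elim disjE) (auto simp: S_map_def)
  qed
  show "S_map j -` {(if i = 2 then S_map 2 b else S_map i a) .. (if i = 2 then S_map 2 a else S_map i b)} \<subseteq> Nul"
    if "j < 4" "j \<noteq> i" for j
  proof -
    have "i = 0 \<or> i = 1 \<or> i = 2 \<or> i = 3" "j = 0 \<or> j = 1 \<or> j = 2 \<or> j = 3" using assms that by auto
    thus ?thesis using assms that by (elim disjE) (auto simp: S_map_def Nul_def)
  qed
qed (use assms in auto)

lemma cyl_meas: "set w \<subseteq> {..<4} \<Longrightarrow> measure mu {lo w..hi w} = wprob lam w"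
proof (induction w)
  case Nil
  have "measure mu {0..1} = 1"
  proof -
    have "measure mu (UNIV - {0..1}) = 0" by (rule null_Nul) (auto simp: Nul_def)
    hence "measure mu UNIV - measure mu {0..1} = 0"
      using finite_measure_Diff[of UNIV "{0..1}"] by (simp add: sets_mu space_mu)
    thus ?thesis using prob_UNIV by simp
  qed
  thus ?case by simp
next
  case (Cons i w)
  have "measure mu {lo (i#w)..hi (i#w)} = p i * measure mu {lo w..hi w}"
    unfolding lo_Cons hi_Cons using img[of "lo w" "hi w" i] lohi_basic[of w] Cons.prems by auto
  thus ?case using Cons by (simp add: wprob_Cons)
qed

end

lemma step_exists:
  fixes f :: "nat \<Rightarrow> real"
  assumes "t \<le> f 0" "f n < t"
  shows "\<exists>k. f (Suc k) < t \<and> t \<le> f k"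
proof (rule ccontr)
  assume "\<not> ?thesis"
  hence "t \<le> f k" for k
  proof (induction k)
    case (Suc k)
    thus ?case using not_less by blast
  qed (use assms(1) in simp)
  thus False using assms(2) by (simp add: not_le[symmetric])
qed

lemma lo_rep0: "lo (replicate k 0) = 0" and hi_rep0: "hi (replicate k 0) = (1/3)^k"
  by (induction k) (simp_all add: lo_Cons hi_Cons)

lemma lo_rep3: "lo (replicate k 3) = 1 - (1/3)^k"
  by (induction k) (simp_all add: lo_Cons field_simps)

lemma hi_rep3: "hi (replicate k 3) = 1"
  by (induction k) (simp_all add: hi_Cons)

lemma wprob_rep: "wprob lam (replicate k i) = p_lam lam i ^ k"
  by (induction k) (simp_all add: wprob_Cons)

lemma pow_powr: "0 \<le> (x::real) \<Longrightarrow> (x^k) powr a = (x powr a)^k"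
  by (induction k) (simp_all add: powr_mult)

lemma third_powr: "(1/3::real) powr g = 3 powr (-g)"
  by (simp add: powr_divide powr_minus_divide)

lemma third_pow: "((1/3::real)^k) powr g = (3 powr (-g))^k"
  by (simp add: pow_powr third_powr)

lemma third_Suc: "((1/3::real)^k) powr g = 3 powr g * ((1/3)^Suc k) powr g"
proof -
  have "((1/3::real)^Suc k) powr g = (1/3) powr g * ((1/3::real)^k) powr g"
    by (subst power_Suc) (rule powr_mult)
  moreover have "3 powr g * (1/3::real) powr g = 1" by (simp add: powr_divide)
  ultimately show ?thesis by (metis mult.assoc mult_1)
qed

lemma one_le_prod_powr: fixes t g :: real assumes "t \<ge> 1" "g > 0" "c \<ge> 1" shows "1 \<le> c powr g * t powr g"
proof -
  have a: "1 \<le> c powr g" by (rule ge_one_powr_ge_zero) (use assms in auto)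
  have b: "1 \<le> t powr g" by (rule ge_one_powr_ge_zero) (use assms in auto)
  have "1*1 \<le> c powr g * t powr g" by (rule mult_mono) (use a b in auto)
  thus ?thesis by simp
qed

context ssm begin

lemma g_pos: "g > 0"
proof -
  have "(3::real) powr (- g) < 3 powr 0" using p_lt1[of 0] by (simp add: p_lam_def)
  hence "- g < 0" by (subst (asm) powr_less_cancel_iff) auto
  thus ?thesis by simp
qed

lemma ball_borel: "ball x r \<in> sets mu" by (simp add: sets_mu)
lemma ivl_sets[simp]: "{a..b} \<in> sets mu" by (simp add: sets_mu)

lemma meas_le': "A \<subseteq> B \<Longrightarrow> measure mu A \<le> measure mu B" if "B \<in> sets mu"
  using that by (intro finite_measure_mono) auto

lemma mu_le1: "measure mu A \<le> 1"
  by (rule prob_le_1)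


lemma third_exists:
  assumes "0 < t" "t < 1"
  shows "\<exists>k. (1/3::real)^(Suc k) < t \<and> t \<le> (1/3)^k"
proof -
  have "\<exists>n. (1/3::real)^n < t" by (rule real_arch_pow_inv) (use assms in simp_all)
  then obtain n where n: "(1/3::real)^n < t" by blast
  show ?thesis
    by (rule step_exists[where f = "\<lambda>k. (1/3::real)^k", OF _ n]) (use assms in simp)
qed

lemma p0_pow_bound:
  assumes "(1/3::real)^(Suc k) < t"
  shows "p 0 ^ k \<le> 3 powr g * t powr g"
proof -
  have "p 0 ^ k = ((1/3)^k) powr g" by (simp add: p_lam_def third_pow)
  also have "\<dots> = 3 powr g * ((1/3)^Suc k) powr g" by (rule third_Suc)
  also have "\<dots> \<le> 3 powr g * t powr g"
    using assms g_pos by (intro mult_left_mono powr_mono2) auto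
  finally show ?thesis .
qed

lemma meas_Un2: "measure mu (A \<union> B) \<le> measure mu A + measure mu B" if "A \<in> sets borel" "B \<in> sets borel"
  by (rule measure_Un_le) (use that sets_mu in auto)

lemma E01: assumes "t \<ge> 0" "e = 0 \<or> e = 1" shows "measure mu {e-t..e+t} \<le> 3 powr g * t powr g"
proof -
  consider "t = 0" | "t \<ge> 1" | "0 < t" "t < 1" using assms by linarith
  thus ?thesis
  proof cases
    case 1
    hence "{e-t..e+t} \<subseteq> Nul" using assms(2) by (auto simp: Nul_def)
    thus ?thesis using null_Nul by (simp add: 1)
  next
    case 2
    have "1 \<le> 3 powr g * t powr g" by (rule one_le_prod_powr) (use 2 g_pos in auto)
    thus ?thesis using mu_le1 order_trans by blast
  next
    case 3
    obtain k where k1: "(1/3::real)^(Suc k) < t" and k2: "t \<le> (1/3)^k"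
      using third_exists[OF 3] by blast
    define w :: "nat list" where "w = (if e = 0 then replicate k 0 else replicate k 3)"
    have sub: "{e-t..e+t} \<subseteq> Nul \<union> {lo w..hi w}"
      using k2 assms(2) by (auto simp: w_def lo_rep0 hi_rep0 lo_rep3 hi_rep3 Nul_def)
    have "measure mu {e-t..e+t} \<le> measure mu (Nul \<union> {lo w..hi w})"
      by (rule meas_le[OF sub]) (rule sets.Un[OF Nul_borel], simp)
    also have "\<dots> \<le> measure mu Nul + measure mu {lo w..hi w}"
      by (rule meas_Un2) (simp_all add: Nul_borel)
    also have "\<dots> = p 0 ^ k"
    proof -
      have "set w \<subseteq> {..<4}" by (auto simp: w_def)
      hence "measure mu {lo w..hi w} = wprob lam w" by (rule cyl_meas)
      also have "\<dots> = p 0 ^ k" by (simp add: w_def wprob_rep p_lam_def)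
      finally show ?thesis using Nul0 by simp
    qed
    also have "\<dots> \<le> 3 powr g * t powr g" by (rule p0_pow_bound[OF k1])
    finally show ?thesis .
  qed
qed

abbreviation "K1 \<equiv> 2 * 18 powr g"

lemma piece:
  assumes "0 \<le> a" "a \<le> b" "b \<le> 1" "i < 4" "{a..b} \<subseteq> {e-6*t..e+6*t}" "e = 0 \<or> e = 1" "t \<ge> 0"
  shows "measure mu {(if i = 2 then S_map 2 b else S_map i a) .. (if i = 2 then S_map 2 a else S_map i b)}
     \<le> 18 powr g * t powr g"
proof -
  have "measure mu {a..b} \<le> measure mu {e-6*t..e+6*t}" by (rule meas_le[OF assms(5)]) simp
  also have "\<dots> \<le> 3 powr g * (6*t) powr g" by (rule E01) (use assms in auto)
  also have "\<dots> = 18 powr g * t powr g" using powr_mult[of 3 6 g] by (simp add: powr_mult)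
  finally have m: "measure mu {a..b} \<le> 18 powr g * t powr g" .
  have "p i * measure mu {a..b} \<le> 1 * measure mu {a..b}"
    using p_lt1[of i] by (intro mult_right_mono) auto
  thus ?thesis using img[OF assms(1-4)] m by simp
qed

lemma Eint_small:
  assumes "0 \<le> t" "t \<le> 1/6" "e = 1/3 \<or> e = 1/2 \<or> e = 2/3"
  shows "measure mu {e-t..e+t} \<le> K1 * t powr g"
proof -
  obtain a1 b1 i1 e1 a2 b2 i2 e2 where
    h1: "0 \<le> a1" "a1 \<le> b1" "b1 \<le> 1" "i1 < 4" "{a1..b1} \<subseteq> {e1-6*t..e1+6*t}" "e1 = 0 \<or> e1 = 1"
    and h2: "0 \<le> a2" "a2 \<le> b2" "b2 \<le> 1" "i2 < 4" "{a2..b2} \<subseteq> {e2-6*t..e2+6*t}" "e2 = 0 \<or> e2 = 1"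
    and cov: "{e-t..e+t} \<subseteq> {(if i1 = 2 then S_map 2 b1 else S_map i1 a1) .. (if i1 = 2 then S_map 2 a1 else S_map i1 b1)}
         \<union> {(if i2 = 2 then S_map 2 b2 else S_map i2 a2) .. (if i2 = 2 then S_map 2 a2 else S_map i2 b2)}"
  proof -
    consider "e = 1/3" | "e = 1/2" | "e = 2/3" using assms(3) by blast
    thus ?thesis
    proof cases
      case 1
      show ?thesis
      proof (rule that[of "1-3*t" 1 0 1 0 "6*t" 1 0])
        show "{e-t..e+t} \<subseteq> {(if (0::nat) = 2 then S_map 2 1 else S_map 0 (1-3*t)) .. (if (0::nat) = 2 then S_map 2 (1-3*t) else S_map 0 1)}
         \<union> {(if (1::nat) = 2 then S_map 2 (6*t) else S_map 1 0) .. (if (1::nat) = 2 then S_map 2 0 else S_map 1 (6*t))}"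
          using 1 assms by (auto; linarith)
      qed (use assms in auto)
    next
      case 2
      show ?thesis
      proof (rule that[of "1-6*t" 1 1 1 "1-6*t" 1 2 1])
        show "{e-t..e+t} \<subseteq> {(if (1::nat) = 2 then S_map 2 1 else S_map 1 (1-6*t)) .. (if (1::nat) = 2 then S_map 2 (1-6*t) else S_map 1 1)}
         \<union> {(if (2::nat) = 2 then S_map 2 1 else S_map 2 (1-6*t)) .. (if (2::nat) = 2 then S_map 2 (1-6*t) else S_map 2 1)}"
        proof -
          have e1: "(if (1::nat) = 2 then S_map 2 1 else S_map 1 (1-6*t)) = 1/2 - t"
            and e2: "(if (1::nat) = 2 then S_map 2 (1-6*t) else S_map 1 1) = 1/2"
            and e3: "(if (2::nat) = 2 then S_map 2 1 else S_map 2 (1-6*t)) = 1/2"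
            and e4: "(if (2::nat) = 2 then S_map 2 (1-6*t) else S_map 2 1) = 1/2 + t"
            by (simp_all add: field_simps)
          show ?thesis unfolding 2 e1 e2 e3 e4 by auto
        qed
      qed (use assms in auto)
    next
      case 3
      show ?thesis
      proof (rule that[of 0 "6*t" 2 0 0 "3*t" 3 0])
        show "{e-t..e+t} \<subseteq> {(if (2::nat) = 2 then S_map 2 (6*t) else S_map 2 0) .. (if (2::nat) = 2 then S_map 2 0 else S_map 2 (6*t))}
         \<union> {(if (3::nat) = 2 then S_map 2 (3*t) else S_map 3 0) .. (if (3::nat) = 2 then S_map 2 0 else S_map 3 (3*t))}"
          using 3 assms by (auto; linarith)
      qed (use assms in auto)
    qed
  qed
  have "measure mu {e-t..e+t} \<le> measure mu ({(if i1 = 2 then S_map 2 b1 else S_map i1 a1) .. (if i1 = 2 then S_map 2 a1 else S_map i1 b1)}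
         \<union> {(if i2 = 2 then S_map 2 b2 else S_map i2 a2) .. (if i2 = 2 then S_map 2 a2 else S_map i2 b2)})"
    by (rule meas_le[OF cov]) simp
  also have "\<dots> \<le> measure mu {(if i1 = 2 then S_map 2 b1 else S_map i1 a1) .. (if i1 = 2 then S_map 2 a1 else S_map i1 b1)}
         + measure mu {(if i2 = 2 then S_map 2 b2 else S_map i2 a2) .. (if i2 = 2 then S_map 2 a2 else S_map i2 b2)}"
    by (rule meas_Un2) simp_all
  also have "\<dots> \<le> 18 powr g * t powr g + 18 powr g * t powr g"
    by (rule add_mono[OF piece[OF h1 assms(1)] piece[OF h2 assms(1)]])
  also have "\<dots> = K1 * t powr g" by simp
  finally show ?thesis .
qed

lemma Eall:
  assumes "t \<ge> 0" "e \<in> {0, 1/3, 1/2, 2/3, 1}"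
  shows "measure mu {e-t..e+t} \<le> K1 * t powr g"
proof (cases "e = 0 \<or> e = 1")
  case True
  have "measure mu {e-t..e+t} \<le> 3 powr g * t powr g" by (rule E01) (use assms True in auto)
  also have "\<dots> \<le> K1 * t powr g"
  proof (rule mult_right_mono)
    have "(3::real) powr g \<le> 18 powr g" using g_pos by (intro powr_mono2) auto
    also have "\<dots> \<le> 2 * 18 powr g" by simp
    finally show "(3::real) powr g \<le> K1" .
  qed simp
  finally show ?thesis .
next
  case False
  hence e: "e = 1/3 \<or> e = 1/2 \<or> e = 2/3" using assms by auto
  show ?thesis
  proof (cases "t \<le> 1/6")
    case True thus ?thesis using Eint_small assms(1) e by blast
  next
    case False
    have "1 \<le> 3 powr g * (6*t) powr g" by (rule one_le_prod_powr) (use False g_pos in auto)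
    also have "\<dots> = 18 powr g * t powr g" using powr_mult[of 3 6 g] by (simp add: powr_mult)
    also have "\<dots> \<le> K1 * t powr g"
    proof -
      have "0 \<le> 18 powr g * t powr g" by simp
      moreover have "K1 * t powr g = 2 * (18 powr g * t powr g)" by simp
      ultimately show ?thesis by linarith
    qed
    finally have "1 \<le> K1 * t powr g" .
    thus ?thesis using mu_le1 order_trans by blast
  qed
qed


definition rho :: "nat \<Rightarrow> real" where
  "rho i = (if i = 1 then 6*lam+1 else if i = 2 then 6*lam-1 else 1)"

lemma p_rho: "p i = rho i * cc i powr g"
proof -
  have six: "(1/6::real) powr g = 6 powr (-g)" by (simp add: powr_divide powr_minus_divide)
  show ?thesis
    by (cases i rule: digit_cases) (simp_all add: rho_def p_lam_def cc_def third_powr six)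
qed

abbreviation "KK \<equiv> K1 * (1 + 1/(6*lam-1))"

lemma K1_le: "K1 \<le> KK * rho i"
proof -
  have l: "6*lam - 1 > 0" using lam1 by simp
  have K1: "K1 \<ge> 0" by simp
  have "1 \<le> (1 + 1/(6*lam-1)) * rho i"
  proof (cases "i = 2")
    case True
    have "(1 + 1/(6*lam-1)) * (6*lam-1) = 6*lam" using l by (simp add: field_simps)
    thus ?thesis using True lam1 by (simp add: rho_def)
  next
    case False
    have "1 \<le> rho i" using False lam1 by (simp add: rho_def)
    moreover have "1 \<le> 1 + 1/(6*lam-1)" using l by simp
    ultimately show ?thesis using mult_mono[of 1 "1 + 1/(6*lam-1)" 1 "rho i"] by simp
  qed
  hence "K1 * 1 \<le> K1 * ((1 + 1/(6*lam-1)) * rho i)" using K1 by (intro mult_left_mono) auto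
  thus ?thesis by (simp add: mult.assoc)
qed

lemma KK_nonneg: "KK \<ge> 0"
  using lam1 by simp

lemma bnd: assumes "L > 0" shows "K1 * (cc i * L) powr g \<le> KK * (p i * L powr g)"
proof -
  have "K1 * (cc i * L) powr g = K1 * (cc i powr g * L powr g)" by (simp add: powr_mult)
  also have "\<dots> \<le> (KK * rho i) * (cc i powr g * L powr g)"
    by (rule mult_right_mono[OF K1_le]) simp
  also have "\<dots> = KK * (p i * L powr g)" by (simp add: p_rho)
  finally show ?thesis .
qed

lemma nb_img:
  assumes "0 \<le> a" "a \<le> b" "b \<le> 1" "i < 4"
    "c = (if i = 2 then S_map 2 b else S_map i a)" "d = (if i = 2 then S_map 2 a else S_map i b)"
    "measure mu {a..b} \<le> KK * P"
  shows "measure mu {c..d} \<le> KK * (p i * P)"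
proof -
  have "measure mu {c..d} = p i * measure mu {a..b}" using img[OF assms(1-4)] assms(5,6) by simp
  also have "\<dots> \<le> p i * (KK * P)" using p_pos[of i] assms(7) by (intro mult_left_mono) auto
  also have "\<dots> = KK * (p i * P)" by (simp add: mult_ac)
  finally show ?thesis .
qed

lemma nb_bd:
  assumes "e \<in> {0, 1/3, 1/2, 2/3, 1}" "{c..d} \<subseteq> {e - cc i * L..e + cc i * L}" "L > 0"
    "P = L powr g"
  shows "measure mu {c..d} \<le> KK * (p i * P)"
proof -
  have "measure mu {c..d} \<le> measure mu {e - cc i * L..e + cc i * L}" by (rule meas_le[OF assms(2)]) simp
  also have "\<dots> \<le> K1 * (cc i * L) powr g"
    by (rule Eall) (use assms(1,3) in \<open>auto simp: cc_def\<close>)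
  also have "\<dots> \<le> KK * (p i * P)" using bnd[OF assms(3)] assms(4) by simp
  finally show ?thesis .
qed

lemma nb_null: "{c..d} \<subseteq> Nul \<Longrightarrow> measure mu {c..d} \<le> KK * (p i * P)" if "P \<ge> 0"
  using null_Nul KK_nonneg p_pos[of i] that by simp

lemma wprob_nonneg: "wprob lam w \<ge> 0"
proof (induction w)
  case (Cons i w)
  have "0 \<le> p i" using p_pos[of i] by simp
  thus ?case using Cons by (simp add: wprob_Cons)
qed simp

lemma neighbor:
  "set w \<subseteq> {..<4} \<Longrightarrow> measure mu {lo w - len w..lo w} \<le> KK * wprob lam w \<and>
     measure mu {hi w..hi w + len w} \<le> KK * wprob lam w"
proof (induction w)
  case Nil
  have "{0 - 1..0::real} \<subseteq> Nul" "{1..1 + 1::real} \<subseteq> Nul" by (auto simp: Nul_def)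
  thus ?case using null_Nul KK_nonneg by simp
next
  case (Cons i w)
  define a where "a = lo w"
  define b where "b = hi w"
  define L where "L = len w"
  define P where "P = wprob lam w"
  have i4: "i < 4" and w4: "set w \<subseteq> {..<4}" using Cons.prems by auto
  have IH: "measure mu {a - L..a} \<le> KK * P" "measure mu {b..b + L} \<le> KK * P"
    using Cons.IH[OF w4] by (simp_all add: a_def b_def L_def P_def)
  have bas: "0 \<le> a" "a \<le> b" "b \<le> 1" "b - a = L" "L > 0" "P \<ge> 0"
    using lohi_basic[of w] len_pos[of w] wprob_nonneg[of w] by (auto simp: a_def b_def L_def P_def)
  have ga: "a \<noteq> 0 \<Longrightarrow> L \<le> a" using lo_gap[of w] by (simp add: a_def L_def)
  have gb: "b \<noteq> 1 \<Longrightarrow> L \<le> 1 - b" using hi_gap[of w] by (simp add: b_def L_def)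
  have pa: "a = 0 \<Longrightarrow> P = L powr g" using lo0_prob[of w lam] by (simp add: a_def P_def L_def)
  have pb: "b = 1 \<Longrightarrow> P = L powr g" using hi1_prob[of w lam] by (simp add: b_def P_def L_def)
  have lo': "lo (i#w) = (if i = 2 then S_map 2 b else S_map i a)"
    and hi': "hi (i#w) = (if i = 2 then S_map 2 a else S_map i b)"
    and len': "len (i#w) = cc i * L"
    and P': "wprob lam (i#w) = p i * P"
    by (simp_all add: lo_Cons hi_Cons len_Cons wprob_Cons a_def b_def L_def P_def)
  have left: "measure mu {lo (i#w) - len (i#w)..lo (i#w)} \<le> KK * wprob lam (i#w)"
  proof -
    consider "i = 0" | "i = 1" | "i = 2" | "i = 3" using i4 by linarith
    thus ?thesis
    proof cases
      case 1
      show ?thesis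
      proof (cases "a = 0")
        case True
        show ?thesis unfolding P' lo' hi' len' by (rule nb_null) (use 1 True bas in \<open>auto simp: Nul_def\<close>)
      next
        case False
        show ?thesis unfolding P' lo' hi' len'
          by (rule nb_img[of "a - L" a i]) (use 1 bas ga[OF False] IH in auto)
      qed
    next
      case 2
      show ?thesis
      proof (cases "a = 0")
        case True
        show ?thesis unfolding P' lo' hi' len'
          by (rule nb_bd[of "1/3" _ _ i L]) (use 2 True bas pa in auto)
      next
        case False
        show ?thesis unfolding P' lo' hi' len'
          by (rule nb_img[of "a - L" a i]) (use 2 bas ga[OF False] IH in auto)
      qed
    next
      case 3
      show ?thesis
      proof (cases "b = 1")
        case True
        show ?thesis unfolding P' lo' hi' len'
          by (rule nb_bd[of "1/2" _ _ i L]) (use 3 True bas pb in auto)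
      next
        case False
        show ?thesis unfolding P' lo' hi' len'
          by (rule nb_img[of b "b + L" i]) (use 3 bas gb[OF False] IH in auto)
      qed
    next
      case 4
      show ?thesis
      proof (cases "a = 0")
        case True
        show ?thesis unfolding P' lo' hi' len'
          by (rule nb_bd[of "2/3" _ _ i L]) (use 4 True bas pa in auto)
      next
        case False
        show ?thesis unfolding P' lo' hi' len'
          by (rule nb_img[of "a - L" a i]) (use 4 bas ga[OF False] IH in auto)
      qed
    qed
  qed
  have right: "measure mu {hi (i#w)..hi (i#w) + len (i#w)} \<le> KK * wprob lam (i#w)"
  proof -
    consider "i = 0" | "i = 1" | "i = 2" | "i = 3" using i4 by linarith
    thus ?thesis
    proof cases
      case 1
      show ?thesis
      proof (cases "b = 1")
        case True
        show ?thesis unfolding P' lo' hi' len'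
          by (rule nb_bd[of "1/3" _ _ i L]) (use 1 True bas pb in auto)
      next
        case False
        show ?thesis unfolding P' lo' hi' len'
          by (rule nb_img[of b "b + L" i]) (use 1 bas gb[OF False] IH in auto)
      qed
    next
      case 2
      show ?thesis
      proof (cases "b = 1")
        case True
        show ?thesis unfolding P' lo' hi' len'
          by (rule nb_bd[of "1/2" _ _ i L]) (use 2 True bas pb in auto)
      next
        case False
        show ?thesis unfolding P' lo' hi' len'
          by (rule nb_img[of b "b + L" i]) (use 2 bas gb[OF False] IH in auto)
      qed
    next
      case 3
      show ?thesis
      proof (cases "a = 0")
        case True
        show ?thesis unfolding P' lo' hi' len'
          by (rule nb_bd[of "2/3" _ _ i L]) (use 3 True bas pa in auto)
      next
        case False
        show ?thesis unfolding P' lo' hi' len'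
          by (rule nb_img[of "a - L" a i]) (use 3 bas ga[OF False] IH in auto)
      qed
    next
      case 4
      show ?thesis
      proof (cases "b = 1")
        case True
        show ?thesis unfolding P' lo' hi' len' by (rule nb_null) (use 4 True bas in \<open>auto simp: Nul_def\<close>)
      next
        case False
        show ?thesis unfolding P' lo' hi' len'
          by (rule nb_img[of b "b + L" i]) (use 4 bas gb[OF False] IH in auto)
      qed
    qed
  qed
  show ?case using left right by blast
qed

end

definition dig :: "real \<Rightarrow> nat \<Rightarrow> nat list" where
  "dig x n = map (\<lambda>k. u_digit k x) [0..<n]"

lemma u_digit_Suc: "u_digit (Suc k) x = u_digit k (T_map x)"
  by (simp only: u_digit_def funpow_Suc_right comp_def)

lemma u_digit_0: "u_digit 0 x = U_map x"
  by (simp add: u_digit_def)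

lemma dig_Suc: "dig x (Suc n) = U_map x # dig (T_map x) n"
  unfolding dig_def by (simp add: map_upt_Suc u_digit_Suc u_digit_0 del: upt_Suc)

lemma dig_snoc: "dig x (Suc n) = dig x n @ [u_digit n x]"
  by (simp add: dig_def)

lemma U_lt4: "U_map x < 4"
  by (simp add: U_map_def)

lemma dig_set: "set (dig x n) \<subseteq> {..<4}"
  using U_lt4 by (auto simp: dig_def u_digit_def)

lemma T_range: "0 \<le> x \<Longrightarrow> x \<le> 1 \<Longrightarrow> 0 \<le> T_map x \<and> T_map x \<le> 1"
  by (simp add: T_map_def)

lemma dig_in: "0 \<le> x \<Longrightarrow> x \<le> 1 \<Longrightarrow> lo (dig x n) \<le> x \<and> x \<le> hi (dig x n)"
proof (induction n arbitrary: x)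
  case 0
  thus ?case by (simp add: dig_def)
next
  case (Suc n)
  have IH: "lo (dig (T_map x) n) \<le> T_map x \<and> T_map x \<le> hi (dig (T_map x) n)"
    using Suc.IH T_range[OF Suc.prems] by blast
  define a where "a = lo (dig (T_map x) n)"
  define b where "b = hi (dig (T_map x) n)"
  have ab: "a \<le> T_map x" "T_map x \<le> b" using IH by (simp_all add: a_def b_def)
  have lo': "lo (dig x (Suc n)) = (if U_map x = 2 then S_map 2 b else S_map (U_map x) a)"
    and hi': "hi (dig x (Suc n)) = (if U_map x = 2 then S_map 2 a else S_map (U_map x) b)"
    by (simp_all add: dig_Suc lo_Cons hi_Cons a_def b_def)
  consider "x < 1/3" | "1/3 \<le> x" "x < 1/2" | "1/2 \<le> x" "x < 2/3" | "2/3 \<le> x" by linarith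
  thus ?case
  proof cases
    case 1
    hence "U_map x = 0" "T_map x = 3*x" by (simp_all add: U_map_def T_map_def)
    thus ?thesis unfolding lo' hi' using ab by simp
  next
    case 2
    hence "U_map x = 1" "T_map x = 6*x - 2" by (simp_all add: U_map_def T_map_def)
    thus ?thesis unfolding lo' hi' using ab by simp
  next
    case 3
    hence "U_map x = 2" "T_map x = 4 - 6*x" by (simp_all add: U_map_def T_map_def)
    thus ?thesis unfolding lo' hi' using ab by simp
  next
    case 4
    hence "U_map x = 3" "T_map x = 3*x - 2" by (simp_all add: U_map_def T_map_def)
    thus ?thesis unfolding lo' hi' using ab by simp
  qed
qed

lemma len_snoc: "len (w @ [i]) = len w * cc i"
  by (simp add: len_def)

lemma wprob_snoc: "wprob lam (w @ [i]) = wprob lam w * p_lam lam i"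
  by (simp add: wprob_def)

context ssm begin

lemma ball_upper:
  assumes "set w \<subseteq> {..<4}" "lo w \<le> x" "x \<le> hi w" "r \<le> len w"
  shows "measure mu (ball x r) \<le> (2*KK + 1) * wprob lam w"
proof -
  have sub: "ball x r \<subseteq> ({lo w - len w..lo w} \<union> {lo w..hi w}) \<union> {hi w..hi w + len w}"
  proof
    fix y assume "y \<in> ball x r"
    hence "\<bar>x - y\<bar> < r" by (simp add: dist_real_def)
    thus "y \<in> ({lo w - len w..lo w} \<union> {lo w..hi w}) \<union> {hi w..hi w + len w}"
      using assms(2-4) by auto
  qed
  have "measure mu (ball x r) \<le> measure mu (({lo w - len w..lo w} \<union> {lo w..hi w}) \<union> {hi w..hi w + len w})"
    by (rule meas_le[OF sub]) auto
  also have "\<dots> \<le> measure mu ({lo w - len w..lo w} \<union> {lo w..hi w}) + measure mu {hi w..hi w + len w}"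
    by (rule meas_Un2) auto
  also have "\<dots> \<le> (measure mu {lo w - len w..lo w} + measure mu {lo w..hi w}) + measure mu {hi w..hi w + len w}"
    using meas_Un2[of "{lo w - len w..lo w}" "{lo w..hi w}"] by simp
  also have "\<dots> \<le> (KK * wprob lam w + wprob lam w) + KK * wprob lam w"
    using conjunct1[OF neighbor[OF assms(1)]] conjunct2[OF neighbor[OF assms(1)]] cyl_meas[OF assms(1)]
    by linarith
  finally show ?thesis by (simp add: algebra_simps)
qed

lemma ball_lower:
  assumes "set w \<subseteq> {..<4}" "lo w \<le> x" "x \<le> hi w" "len w < r"
  shows "wprob lam w \<le> measure mu (ball x r)"
proof -
  have sub: "{lo w..hi w} \<subseteq> ball x r"
  proof
    fix y assume "y \<in> {lo w..hi w}"
    hence "\<bar>x - y\<bar> < r" using assms(2-4) hi_lo[of w] by auto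
    thus "y \<in> ball x r" by (simp add: dist_real_def)
  qed
  show ?thesis using meas_le[OF sub] cyl_meas[OF assms(1)] by simp
qed

end

lemma key_ineq:
  fixes a A b Bn C D G :: real
  assumes "b < 0" "Bn < 0" "\<bar>a - A\<bar> \<le> C" "\<bar>b - Bn\<bar> \<le> D" "0 \<le> A/Bn" "A/Bn \<le> G" "D \<ge> 0"
  shows "\<bar>a/b - A/Bn\<bar> \<le> (C + G*D)/(-b)"
proof -
  define q where "q = A/Bn"
  have Aq: "A = q * Bn" using assms(2) by (simp add: q_def)
  have eq: "a/b - A/Bn = ((a - A) - q*(b - Bn))/b"
    using assms(1,2) by (simp add: Aq field_simps)
  have q0: "0 \<le> q" using assms(5) by (simp add: q_def)
  have t1: "\<bar>(a - A) - q*(b - Bn)\<bar> \<le> \<bar>a - A\<bar> + \<bar>q*(b - Bn)\<bar>" by (rule abs_triangle_ineq4)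
  have t2: "\<bar>q*(b - Bn)\<bar> = q*\<bar>b - Bn\<bar>" using q0 by (simp add: abs_mult)
  have t3: "q*\<bar>b - Bn\<bar> \<le> G*D" using assms(4-7) q0 unfolding q_def by (intro mult_mono) auto
  have num: "\<bar>(a - A) - q*(b - Bn)\<bar> \<le> C + G*D" using t1 t2 t3 assms(3) by linarith
  have "\<bar>a/b - A/Bn\<bar> = \<bar>(a - A) - q*(b - Bn)\<bar> / (-b)"
    unfolding eq using assms(1) by (simp add: abs_div_pos abs_divide)
  also have "\<dots> \<le> (C + G*D)/(-b)" using num assms(1) by (intro divide_right_mono) auto
  finally show ?thesis .
qed

lemma small_quot:
  fixes E d r :: real
  assumes "0 < r" "r < exp (-E/d)" "d > 0" "E \<ge> 0"
  shows "E/(-ln r) < d"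
proof -
  have "ln r < ln (exp (-E/d))" using assms(1,2) by (subst ln_less_cancel_iff) auto
  hence lt: "E/d < - ln r" by simp
  have "0 \<le> E/d" using assms(3,4) by simp
  hence pos: "- ln r > 0" using lt by linarith
  have "E < (- ln r) * d" using lt assms(3) by (simp add: pos_divide_less_eq)
  hence "E < d * (- ln r)" by (simp add: mult.commute)
  thus ?thesis by (subst pos_divide_less_eq[OF pos])
qed

lemma beta_Suc: "beta_cnt i x (Suc n) = beta_cnt i x n + (if u_digit n x = i then 1 else 0)"
proof -
  have fin: "finite {k. k < n \<and> u_digit k x = i}" by (rule finite_subset[of _ "{..<n}"]) auto
  show ?thesis
  proof (cases "u_digit n x = i")
    case True
    hence "{k. k < Suc n \<and> u_digit k x = i} = insert n {k. k < n \<and> u_digit k x = i}"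
      by (auto simp: less_Suc_eq)
    thus ?thesis using True fin by (simp add: beta_cnt_def)
  next
    case False
    hence "{k. k < Suc n \<and> u_digit k x = i} = {k. k < n \<and> u_digit k x = i}"
      by (auto simp: less_Suc_eq)
    thus ?thesis using False by (simp add: beta_cnt_def)
  qed
qed

lemma beta_0: "beta_cnt i x 0 = 0" by (simp add: beta_cnt_def)

context ssm begin

definition "LL x n = len (dig x n)"
definition "PP x n = wprob lam (dig x n)"

lemma LL_Suc: "LL x (Suc n) = LL x n * cc (u_digit n x)"
  by (simp add: LL_def dig_snoc len_snoc)

lemma PP_Suc: "PP x (Suc n) = PP x n * p (u_digit n x)"
  by (simp add: PP_def dig_snoc wprob_snoc)

lemma LL_0: "LL x 0 = 1" and PP_0: "PP x 0 = 1"
  by (simp_all add: LL_def PP_def dig_def)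

lemma LL_pos: "LL x n > 0" by (simp add: LL_def len_pos)

lemma cc_bounds: "1/6 \<le> cc i" "cc i \<le> 1/3"
  by (simp_all add: cc_def)

lemma LL_Suc_le: "LL x (Suc n) \<le> LL x n / 3"
  using LL_pos[of x n] cc_bounds(2)[of "u_digit n x"] by (simp add: LL_Suc mult_left_mono)

lemma LL_Suc_ge: "LL x n / 6 \<le> LL x (Suc n)"
  using LL_pos[of x n] cc_bounds(1)[of "u_digit n x"] by (simp add: LL_Suc mult_left_mono)

lemma LL_Suc_lt: "LL x (Suc n) < LL x n"
  using LL_Suc_le[of x n] LL_pos[of x n] by linarith

lemma LL_pow: "LL x n \<le> (1/3)^n"
proof (induction n)
  case 0 thus ?case by (simp add: LL_0)
next
  case (Suc n)
  thus ?case using LL_Suc_le[of x n] by simp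
qed

lemma LL_anti: "m \<le> n \<Longrightarrow> LL x n \<le> LL x m"
  by (rule lift_Suc_antimono_le[of "LL x"]) (use LL_Suc_lt less_imp_le in auto)

definition "pm = p 0 * p 1 * p 2 * p 3"

lemma pm_pos: "pm > 0" using p_pos by (simp add: pm_def)

lemma p_ge_pm: "pm \<le> p i"
proof -
  have le1: "\<And>j. p j \<le> 1" using p_lt1 less_imp_le by blast
  have nn: "\<And>j. 0 \<le> p j" using p_pos less_imp_le by blast
  have a: "p 1 * p 2 * p 3 \<le> 1" "p 0 * p 2 * p 3 \<le> 1" "p 0 * p 1 * p 3 \<le> 1" "p 0 * p 1 * p 2 \<le> 1"
    using le1 nn by (simp_all add: mult_le_one)
  have "pm \<le> p 0" using mult_left_mono[OF a(1) nn[of 0]] by (simp add: pm_def mult_ac)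
  moreover have "pm \<le> p 1" using mult_left_mono[OF a(2) nn[of 1]] by (simp add: pm_def mult_ac)
  moreover have "pm \<le> p 2" using mult_left_mono[OF a(3) nn[of 2]] by (simp add: pm_def mult_ac)
  moreover have "pm \<le> p 3" using mult_left_mono[OF a(4) nn[of 3]] by (simp add: pm_def mult_ac)
  moreover have "p i = p 0 \<or> p i = p 1 \<or> p i = p 2 \<or> p i = p 3" by (simp add: p_lam_def)
  ultimately show ?thesis by auto
qed

lemma pm_le1: "pm \<le> 1" using p_ge_pm[of 0] p_lt1[of 0] by simp

lemma PP_pos: "PP x n > 0"
  by (induction n) (simp_all add: PP_0 PP_Suc p_pos)

lemma PP_le1: "PP x n \<le> 1"
proof (induction n)
  case (Suc n)
  have "PP x n * p (u_digit n x) \<le> 1 * 1"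
    using Suc PP_pos[of x n] p_lt1 p_pos by (intro mult_mono) (auto intro: less_imp_le)
  thus ?case by (simp add: PP_Suc)
qed (simp add: PP_0)

lemma PP_Suc_ge: "pm * PP x n \<le> PP x (Suc n)"
  using p_ge_pm[of "u_digit n x"] PP_pos[of x n]
  by (simp add: PP_Suc mult.commute mult_right_mono)

lemma PP_pow: "pm ^ n \<le> PP x n"
proof (induction n)
  case (Suc n)
  have "pm * pm ^ n \<le> pm * PP x n" using Suc pm_pos by (intro mult_left_mono) auto
  thus ?case using PP_Suc_ge[of x n] by simp
qed (simp add: PP_0)

definition "G = - ln pm / ln 3"

lemma G_nonneg: "G \<ge> 0"
  unfolding G_def by (rule divide_nonneg_pos) (use pm_pos pm_le1 in simp_all)

definition "gg x n = ln (PP x n) / ln (LL x n)"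

lemma lnLL_bound: "ln (LL x n) \<le> - real n * ln 3"
proof -
  have "ln (LL x n) \<le> ln ((1/3)^n)" using LL_pos[of x n] LL_pow[of x n] by (subst ln_le_cancel_iff) auto
  also have "\<dots> = - real n * ln 3" by (simp add: ln_realpow ln_div)
  finally show ?thesis .
qed

lemma lnPP_bound: "real n * ln pm \<le> ln (PP x n)"
proof -
  have "ln (pm ^ n) \<le> ln (PP x n)" using PP_pos[of x n] PP_pow[of n x] pm_pos
    by (subst ln_le_cancel_iff) auto
  thus ?thesis using pm_pos by (simp add: ln_realpow)
qed

lemma gg_bounds: assumes "n \<ge> 1" shows "0 \<le> gg x n" "gg x n \<le> G"
proof -
  have l3: "ln (3::real) > 0" by simp
  have "real n * ln 3 > 0" using assms l3 by simp
  hence Ln: "ln (LL x n) < 0" using lnLL_bound[of x n] by linarith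
  have Pn: "ln (PP x n) \<le> 0" using PP_pos[of x n] PP_le1[of x n] by simp
  show "0 \<le> gg x n" unfolding gg_def using Ln Pn by (simp add: divide_nonpos_neg)
  have "- ln (PP x n) \<le> G * (- ln (LL x n))"
  proof -
    have "- ln (PP x n) \<le> real n * (- ln pm)" using lnPP_bound[of n x] by simp
    also have "\<dots> = G * (real n * ln 3)" using l3 by (simp add: G_def)
    also have "\<dots> \<le> G * (- ln (LL x n))"
      using lnLL_bound[of x n] G_nonneg by (intro mult_left_mono) auto
    finally show ?thesis .
  qed
  hence "G * ln (LL x n) \<le> ln (PP x n)" by simp
  thus "gg x n \<le> G" unfolding gg_def using neg_divide_le_eq[OF Ln] by simp
qed


lemma ln_cc: "ln (cc i) = - (if i = 1 \<or> i = 2 then ln 6 else ln 3)"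
  by (simp add: cc_def ln_div)

lemma ln_p: "ln (p i) = (if i = 1 then ln (6*lam+1) else if i = 2 then ln (6*lam-1) else 0)
    - g * (if i = 1 \<or> i = 2 then ln 6 else ln 3)"
proof -
  have a: "6*lam - 1 > 0" "6*lam + 1 > 0" using lam1 by simp_all
  show ?thesis using a by (simp add: p_lam_def ln_mult ln_powr)
qed

abbreviation "bb i x n \<equiv> real (beta_cnt i x n)"

lemma lnLL_formula: "ln (LL x n) = - ((bb 0 x n + bb 3 x n) * ln 3 + (bb 1 x n + bb 2 x n) * ln 6)"
proof (induction n)
  case 0 thus ?case by (simp add: LL_0 beta_0)
next
  case (Suc n)
  have "ln (LL x (Suc n)) = ln (LL x n) + ln (cc (u_digit n x))"
    using LL_pos[of x n] cc_bounds(1)[of "u_digit n x"] by (simp add: LL_Suc ln_mult)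
  moreover have "u_digit n x = 0 \<or> u_digit n x = 1 \<or> u_digit n x = 2 \<or> u_digit n x = 3"
    using U_lt4[of "(T_map ^^ n) x"] by (simp add: u_digit_def) linarith
  ultimately show ?case using Suc
    by (elim disjE) (simp_all add: beta_Suc ln_cc ln_div algebra_simps)
qed

lemma lnPP_formula: "ln (PP x n) = bb 1 x n * ln (6*lam+1) + bb 2 x n * ln (6*lam-1)
    - g * ((bb 0 x n + bb 3 x n) * ln 3 + (bb 1 x n + bb 2 x n) * ln 6)"
proof (induction n)
  case 0 thus ?case by (simp add: PP_0 beta_0)
next
  case (Suc n)
  have "ln (PP x (Suc n)) = ln (PP x n) + ln (p (u_digit n x))"
    using PP_pos[of x n] p_pos[of "u_digit n x"] by (simp add: PP_Suc ln_mult)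
  moreover have "u_digit n x = 0 \<or> u_digit n x = 1 \<or> u_digit n x = 2 \<or> u_digit n x = 3"
    using U_lt4[of "(T_map ^^ n) x"] by (simp add: u_digit_def) linarith
  ultimately show ?case using Suc
    by (elim disjE) (simp_all add: beta_Suc ln_p algebra_simps)
qed

definition "hh x n = (bb 1 x n * ln (6*lam+1) + bb 2 x n * ln (6*lam-1)) /
   ((bb 0 x n + bb 3 x n) * ln 3 + (bb 1 x n + bb 2 x n) * ln 6)"

lemma gg_hh: assumes "n \<ge> 1" shows "gg x n = g - hh x n"
proof -
  define D where "D = (bb 0 x n + bb 3 x n) * ln 3 + (bb 1 x n + bb 2 x n) * ln 6"
  define N where "N = bb 1 x n * ln (6*lam+1) + bb 2 x n * ln (6*lam-1)"
  have "real n * ln 3 > 0" using assms by simp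
  hence "ln (LL x n) < 0" using lnLL_bound[of x n] by linarith
  hence D: "D > 0" using lnLL_formula[of x n] by (simp add: D_def)
  have "gg x n = (N - g * D) / (- D)"
    unfolding gg_def lnLL_formula lnPP_formula by (simp add: D_def N_def)
  also have "\<dots> = g - N / D" using D by (simp add: field_simps)
  finally show ?thesis by (simp add: hh_def N_def D_def)
qed

definition "FF x r = ln (measure mu (ball x r)) / ln r"

definition "KP = 2*KK + 1"
definition "C1 = - ln pm + ln KP"
definition "EE = C1 + G * ln 6"

lemma KP_ge1: "KP \<ge> 1" using KK_nonneg by (simp add: KP_def)

lemma EE_nonneg: "EE \<ge> 0"
proof -
  have "- ln pm \<ge> 0" using pm_pos pm_le1 by simp
  moreover have "ln KP \<ge> 0" using KP_ge1 by simp
  moreover have "G * ln 6 \<ge> 0" using G_nonneg by simp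
  ultimately show ?thesis by (simp add: EE_def C1_def)
qed

lemma approx:
  assumes x: "0 \<le> x" "x \<le> 1" and n: "n \<ge> 1" and r: "LL x (Suc n) < r" "r \<le> LL x n"
  shows "\<bar>FF x r - gg x n\<bar> \<le> EE / (- ln r)"
proof -
  have rpos: "r > 0" using r LL_pos[of x "Suc n"] by linarith
  have in1: "lo (dig x n) \<le> x" "x \<le> hi (dig x n)" using dig_in[OF x] by auto
  have in2: "lo (dig x (Suc n)) \<le> x" "x \<le> hi (dig x (Suc n))" using dig_in[OF x] by auto
  have up: "measure mu (ball x r) \<le> KP * PP x n"
    using ball_upper[OF dig_set in1 r(2)[unfolded LL_def]] by (simp add: KP_def PP_def)
  have lowr: "PP x (Suc n) \<le> measure mu (ball x r)"
    using ball_lower[OF dig_set in2 r(1)[unfolded LL_def]] by (simp add: PP_def)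
  have low: "pm * PP x n \<le> measure mu (ball x r)" using lowr PP_Suc_ge[of x n] by linarith
  have Ppos: "PP x n > 0" by (rule PP_pos)
  have mpos: "measure mu (ball x r) > 0" using low Ppos pm_pos by (smt (verit) mult_pos_pos)
  have a1: "ln (measure mu (ball x r)) \<le> ln KP + ln (PP x n)"
  proof -
    have "ln (measure mu (ball x r)) \<le> ln (KP * PP x n)"
      using up mpos Ppos KP_ge1 by (subst ln_le_cancel_iff) auto
    also have "\<dots> = ln KP + ln (PP x n)" using Ppos KP_ge1 by (simp add: ln_mult)
    finally show ?thesis .
  qed
  have a2: "ln pm + ln (PP x n) \<le> ln (measure mu (ball x r))"
  proof -
    have "ln pm + ln (PP x n) = ln (pm * PP x n)" using Ppos pm_pos by (simp add: ln_mult)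
    also have "\<dots> \<le> ln (measure mu (ball x r))"
      using low mpos Ppos pm_pos by (subst ln_le_cancel_iff) auto
    finally show ?thesis .
  qed
  have A: "\<bar>ln (measure mu (ball x r)) - ln (PP x n)\<bar> \<le> C1"
    using a1 a2 pm_pos pm_le1 KP_ge1 unfolding C1_def
    by (smt (verit) ln_ge_zero ln_le_zero_iff)
  have b1: "ln r \<le> ln (LL x n)" using rpos r(2) by simp
  have b2: "ln (LL x n) - ln 6 \<le> ln r"
  proof -
    have "LL x n / 6 < r" using LL_Suc_ge[of x n] r(1) by linarith
    hence "ln (LL x n / 6) \<le> ln r" using LL_pos[of x n] rpos by simp
    thus ?thesis using LL_pos[of x n] by (simp add: ln_div)
  qed
  have B: "\<bar>ln r - ln (LL x n)\<bar> \<le> ln 6" using b1 b2 by simp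
  have LL1: "LL x n \<le> 1/3" using LL_pow[of x n] n
    by (smt (verit) LL_anti LL_pow One_nat_def power_one_right)
  have blt: "ln r < 0" using r(2) LL1 rpos by simp
  have Blt: "ln (LL x n) < 0" using LL1 LL_pos[of x n] by simp
  show ?thesis
    using key_ineq[OF blt Blt A B _ _ ] gg_bounds[OF n, of x]
    by (simp add: FF_def gg_def EE_def)
qed

end

context ssm begin

lemma exists_n:
  assumes "0 < r" "r \<le> LL x 1"
  shows "\<exists>n\<ge>1. LL x (Suc n) < r \<and> r \<le> LL x n"
proof -
  have "\<exists>m. (1/3::real)^m < r" by (rule real_arch_pow_inv) (use assms in simp_all)
  then obtain m where m: "(1/3::real)^m < r" by blast
  have "LL x (Suc m) < r" using LL_Suc_lt[of x m] LL_pow[of x m] m by linarith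
  hence "\<exists>k. LL x (Suc (Suc k)) < r \<and> r \<le> LL x (Suc k)"
    using step_exists[where f = "\<lambda>k. LL x (Suc k)" and t = r and n = m] assms(2) by simp
  then obtain k where "LL x (Suc (Suc k)) < r" "r \<le> LL x (Suc k)" by blast
  thus ?thesis by (intro exI[of _ "Suc k"]) simp
qed

lemma n_large: "r \<le> LL x M \<Longrightarrow> LL x (Suc n) < r \<Longrightarrow> M \<le> n"
proof (rule ccontr)
  assume a: "r \<le> LL x M" "LL x (Suc n) < r" "\<not> M \<le> n"
  hence "Suc n \<le> M" by simp
  hence "LL x M \<le> LL x (Suc n)" by (rule LL_anti)
  thus False using a by linarith
qed

lemma dir1:
  assumes x: "0 \<le> x" "x \<le> 1"
  shows "liminf (\<lambda>n. ereal (gg x n)) \<le> Liminf (at_right 0) (\<lambda>r. ereal (FF x r))"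
proof (subst le_Liminf_iff, intro allI impI)
  fix y assume y: "y < liminf (\<lambda>n. ereal (gg x n))"
  obtain z1 where z1: "y < ereal z1" "ereal z1 < liminf (\<lambda>n. ereal (gg x n))"
    using ereal_dense2[OF y] by blast
  obtain z2 where z2: "ereal z1 < ereal z2" "ereal z2 < liminf (\<lambda>n. ereal (gg x n))"
    using ereal_dense2[OF z1(2)] by blast
  have "eventually (\<lambda>n. ereal z2 < ereal (gg x n)) sequentially" using less_LiminfD[OF z2(2)] .
  then obtain M where M: "\<And>n. n \<ge> M \<Longrightarrow> z2 < gg x n" by (auto simp: eventually_sequentially)
  define d where "d = z2 - z1"
  have d: "d > 0" using z2(1) by (simp add: d_def)
  define M' where "M' = max M 1"
  define b where "b = min (LL x M') (exp (- EE / d))"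
  have b: "b > 0" using LL_pos by (simp add: b_def)
  show "\<forall>\<^sub>F r in at_right 0. y < ereal (FF x r)"
    unfolding eventually_at_right_field
  proof (intro exI[of _ b] conjI allI impI)
    show "0 < b" by (rule b)
    fix r :: real assume r: "0 < r" "r < b"
    have rM: "r \<le> LL x M'" using r by (simp add: b_def)
    have "LL x M' \<le> LL x 1" by (rule LL_anti) (simp add: M'_def)
    then obtain n where n: "n \<ge> 1" "LL x (Suc n) < r" "r \<le> LL x n"
      using exists_n[OF r(1) order_trans[OF rM]] by blast
    have "M' \<le> n" by (rule n_large[OF rM n(2)])
    hence gn: "z2 < gg x n" using M by (simp add: M'_def)
    have "\<bar>FF x r - gg x n\<bar> \<le> EE / (- ln r)" by (rule approx[OF x n])
    hence ab: "- (FF x r - gg x n) \<le> EE / (- ln r)" by (rule abs_le_D2)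
    have "EE / (- ln r) < d"
      by (rule small_quot) (use r d EE_nonneg in \<open>auto simp: b_def\<close>)
    hence "z1 < FF x r" using gn ab d_def by linarith
    hence "ereal z1 < ereal (FF x r)" by simp
    thus "y < ereal (FF x r)" by (rule less_trans[OF z1(1)])
  qed
qed

lemma dir2:
  assumes x: "0 \<le> x" "x \<le> 1"
  shows "Liminf (at_right 0) (\<lambda>r. ereal (FF x r)) \<le> liminf (\<lambda>n. ereal (gg x n))"
proof (subst le_Liminf_iff, intro allI impI)
  fix y assume y: "y < Liminf (at_right 0) (\<lambda>r. ereal (FF x r))"
  obtain z1 where z1: "y < ereal z1" "ereal z1 < Liminf (at_right 0) (\<lambda>r. ereal (FF x r))"
    using ereal_dense2[OF y] by blast
  obtain z2 where z2: "ereal z1 < ereal z2" "ereal z2 < Liminf (at_right 0) (\<lambda>r. ereal (FF x r))"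
    using ereal_dense2[OF z1(2)] by blast
  have "\<forall>\<^sub>F r in at_right 0. ereal z2 < ereal (FF x r)" using less_LiminfD[OF z2(2)] .
  then obtain b where b: "b > 0" "\<And>r. 0 < r \<Longrightarrow> r < b \<Longrightarrow> z2 < FF x r"
    unfolding eventually_at_right_field by auto
  define d where "d = z2 - z1"
  have d: "d > 0" using z2(1) by (simp add: d_def)
  define c where "c = min b (exp (- EE / d))"
  have c: "c > 0" using b by (simp add: c_def)
  have "\<exists>N. (1/3::real)^N < c" by (rule real_arch_pow_inv) (use c in simp_all)
  then obtain N where N: "(1/3::real)^N < c" by blast
  show "\<forall>\<^sub>F n in sequentially. y < ereal (gg x n)"
    unfolding eventually_sequentially
  proof (intro exI[of _ "max N 1"] allI impI)
    fix n assume n: "max N 1 \<le> n"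
    have "(1/3::real)^n \<le> (1/3)^N" using n by (intro power_decreasing) auto
    hence rc: "LL x n < c" using LL_pow[of x n] N by linarith
    have rpos: "0 < LL x n" by (rule LL_pos)
    have n1: "n \<ge> 1" using n by simp
    have "z2 < FF x (LL x n)" using b(2)[OF rpos] rc by (simp add: c_def)
    moreover have "\<bar>FF x (LL x n) - gg x n\<bar> \<le> EE / (- ln (LL x n))"
      by (rule approx[OF x n1 LL_Suc_lt order_refl])
    hence "FF x (LL x n) - gg x n \<le> EE / (- ln (LL x n))" by (rule abs_le_D1)
    moreover have "EE / (- ln (LL x n)) < d"
      by (rule small_quot) (use rpos rc d EE_nonneg in \<open>auto simp: c_def\<close>)
    ultimately have "z1 < gg x n" using d_def by linarith
    hence "ereal z1 < ereal (gg x n)" by simp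
    thus "y < ereal (gg x n)" by (rule less_trans[OF z1(1)])
  qed
qed

lemma main_loc:
  assumes x: "0 \<le> x" "x \<le> 1"
  shows "Liminf (at_right 0) (\<lambda>r. ereal (ln (measure mu (ball x r)) / ln r)) =
         ereal (gamma_lam lam) -
         Limsup sequentially (\<lambda>n. ereal
           ((real (beta_cnt 1 x n) * ln (6*lam+1) + real (beta_cnt 2 x n) * ln (6*lam-1)) /
            (real (beta_cnt 0 x n + beta_cnt 3 x n) * ln 3 + real (beta_cnt 1 x n + beta_cnt 2 x n) * ln 6)))"
proof -
  have hh: "(\<lambda>n. ereal
           ((real (beta_cnt 1 x n) * ln (6*lam+1) + real (beta_cnt 2 x n) * ln (6*lam-1)) /
            (real (beta_cnt 0 x n + beta_cnt 3 x n) * ln 3 + real (beta_cnt 1 x n + beta_cnt 2 x n) * ln 6)))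
     = (\<lambda>n. ereal (hh x n))" by (simp add: hh_def)
  have FF: "(\<lambda>r. ereal (ln (measure mu (ball x r)) / ln r)) = (\<lambda>r. ereal (FF x r))"
    by (simp add: FF_def)
  have "Liminf (at_right 0) (\<lambda>r. ereal (FF x r)) = liminf (\<lambda>n. ereal (gg x n))"
    using dir1[OF x] dir2[OF x] by (rule antisym[rotated])
  also have "\<dots> = liminf (\<lambda>n. ereal g - ereal (hh x n))"
  proof (rule Liminf_eq)
    show "\<forall>\<^sub>F n in sequentially. ereal (gg x n) = ereal g - ereal (hh x n)"
      unfolding eventually_sequentially by (intro exI[of _ 1] allI impI) (simp add: gg_hh)
  qed
  also have "\<dots> = ereal g - limsup (\<lambda>n. ereal (hh x n))"
    by (rule liminf_ereal_cminus) simp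
  finally show ?thesis unfolding hh FF .
qed

end

theorem proposition4p2:
  fixes lam :: real and mu :: "real measure" and x :: real
  assumes "1/6 < lam" and "lam < 5/6"
    and "self_similar_lam lam mu"
    and "0 \<le> x" and "x \<le> 1"
  shows "Liminf (at_right 0) (\<lambda>r. ereal (ln (measure mu (ball x r)) / ln r)) =
         ereal (gamma_lam lam) -
         Limsup sequentially (\<lambda>n. ereal
           ((real (beta_cnt 1 x n) * ln (6*lam+1) + real (beta_cnt 2 x n) * ln (6*lam-1)) /
            (real (beta_cnt 0 x n + beta_cnt 3 x n) * ln 3 + real (beta_cnt 1 x n + beta_cnt 2 x n) * ln 6)))"
proof -
  have "ssm mu lam"
    unfolding ssm_def ssm_axioms_def using assms(1-3) by (auto simp: self_similar_lam_def)
  then interpret ssm mu lam .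
  show ?thesis by (rule main_loc) (use assms in auto)
qed

end
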